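(* Let $a\in[-1,1/3]$, $a\neq0$. For $\theta\in(2\pi/3,\pi)$ define \[ \zeta(\theta)=\frac{(2a-1)\cos\theta+\sqrt{(1-4a)\cos^2\theta+a}}{1-4a\cos^2\theta},\qquad z(\theta)=\frac{a\zeta(\theta)}{(2\cos\theta+\zeta(\theta))(1+2\zeta(\theta)\cos\theta)}, \] with $z$ extended by continuity at the removable singularity $\theta=\cos^{-1}(-1/(2\sqrt a))$ when $1/4<a\le1/3$. Then $z$ maps $(2\pi/3,\pi)$ onto the interior of \[ I_a=\left(-\infty,\ \frac{-2+9a-2\sqrt{(1-3a)^3}}{27}\right], \] i.e. onto $\left(-\infty,\frac{-2+9a-2\sqrt{(1-3a)^3}}{27}\right)$. *)

theory Defs
  imports "HOL-Analysis.Analysis"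
begin

definition zeta :: "real \<Rightarrow> real \<Rightarrow> real" where
  "zeta a \<theta> = ((2*a - 1) * cos \<theta> + sqrt ((1 - 4*a) * (cos \<theta>)^2 + a))
                 / (1 - 4*a*(cos \<theta>)^2)"

definition z_raw :: "real \<Rightarrow> real \<Rightarrow> real" where
  "z_raw a \<theta> = a * zeta a \<theta> / ((2 * cos \<theta> + zeta a \<theta>) * (1 + 2 * zeta a \<theta> * cos \<theta>))"

definition z_singular :: "real \<Rightarrow> real \<Rightarrow> bool" where
  "z_singular a \<theta> \<longleftrightarrow> 1 - 4*a*(cos \<theta>)^2 = 0
     \<or> (2 * cos \<theta> + zeta a \<theta>) * (1 + 2 * zeta a \<theta> * cos \<theta>) = 0"

definition z_fun :: "real \<Rightarrow> real \<Rightarrow> real" where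
  "z_fun a \<theta> = (if z_singular a \<theta> then Lim (at \<theta>) (z_raw a) else z_raw a \<theta>)"

end

theory Submission
  imports Defs
begin


definition Sf :: "real \<Rightarrow> real \<Rightarrow> real" where
  "Sf a c = sqrt ((1 - 4*a) * c^2 + a)"
definition Qf :: "real \<Rightarrow> real \<Rightarrow> real" where
  "Qf a c = (1 - 2*c^2 - 2*c*Sf a c) / (1 - 4*c^2)"
definition fq :: "real \<Rightarrow> real \<Rightarrow> real" where
  "fq a q = q^3 - q^2 + a*q"
definition G :: "real \<Rightarrow> real \<Rightarrow> real" where
  "G a c = fq a (Qf a c)"

lemma csq: assumes "-1 < (c::real)" "c < -1/2" shows "c^2 > 1/4" "c^2 < 1"
proof -
  have "(c - 1/2) * (c + 1/2) > 0" using assms by (intro mult_neg_neg) auto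
  then show "c^2 > 1/4" by (simp add: power2_eq_square algebra_simps)
  have "(c - 1) * (c + 1) < 0" using assms by (intro mult_neg_pos) auto
  then show "c^2 < 1" by (simp add: power2_eq_square algebra_simps)
qed

lemma S_sq:
  assumes "a \<le> 1/3" "-1 < c" "c < -1/2"
  shows "(Sf a c)^2 = (1 - 4*a) * c^2 + a" "Sf a c \<ge> 0"
proof -
  have c2: "c^2 > 1/4" "c^2 < 1" using csq assms(2,3) by auto
  have e: "(1 - 4*a) * c^2 + a = c^2 + a*(1 - 4*c^2)" by algebra
  have "(1 - 4*a) * c^2 + a > 0"
  proof (cases "a \<ge> 0")
    case True
    have "a*(1 - 4*c^2) \<ge> (1/3)*(1-4*c^2)" using True assms c2
      by (intro mult_right_mono_neg) auto
    then show ?thesis using c2 e by (simp add: algebra_simps)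
  next
    case False
    have "a*(1 - 4*c^2) > 0" using False c2 by (intro mult_neg_neg) auto
    then show ?thesis using c2 e by linarith
  qed
  then show "(Sf a c)^2 = (1 - 4*a) * c^2 + a" "Sf a c \<ge> 0" unfolding Sf_def by auto
qed

lemma lemA:
  assumes a: "-1 \<le> a" "a \<le> 1/3" "a \<noteq> 0" and c: "-1 < cos th" "cos th < -1/2"
    and d: "1 - 4*a*(cos th)^2 \<noteq> 0"
  shows "\<not> z_singular a th" "z_raw a th = G a (cos th)"
proof -
  define c where "c = cos th"
  define S where "S = Sf a c"
  define dd where "dd = 1 - 4*a*c^2"
  define P where "P = 1 - 2*c^2 + 2*c*S"
  define N where "N = 1 - 2*c^2 - 2*c*S"
  define D where "D = 1 - 4*c^2"
  have S2: "S^2 = (1 - 4*a) * c^2 + a" using S_sq[OF a(2)] c unfolding S_def c_def by auto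
  have dd: "dd \<noteq> 0" using d unfolding dd_def c_def .
  have D: "D \<noteq> 0" using csq[OF c] unfolding D_def c_def by auto
  have PN0: "P * N - D * dd = -4*c^2*(S^2 - ((1 - 4*a) * c^2 + a))" unfolding P_def N_def D_def dd_def
    by (simp add: power2_eq_square algebra_simps)
  have PN: "P * N = D * dd" using PN0 S2 by simp
  have P: "P \<noteq> 0" using PN D dd by auto
  define ze where "ze = zeta a th"
  have ze: "ze = ((2*a - 1) * c + S) / dd" unfolding ze_def zeta_def dd_def S_def Sf_def c_def ..
  define m where "m = 1 + 2*ze*c"
  have m: "m = P / dd" unfolding m_def ze P_def using dd by (simp add: field_simps dd_def power2_eq_square)
  have m0: "m \<noteq> 0" using m P dd by auto
  have Q0: "Qf a c = N / D" unfolding Qf_def N_def D_def S_def ..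
  have Q: "Qf a c = 1/m" unfolding Q0 m using PN D dd P
    by (simp add: field_simps)
  have zd: "ze * dd = (2*a - 1) * c + S" using ze dd by simp
  have md: "m * dd = P" using m dd by simp
  have "(ze^2 + 2*c*ze) * dd^2 = (a * m^2) * dd^2"
  proof -
    have "(ze^2 + 2*c*ze) * dd^2 = (ze*dd)^2 + 2*c*(ze*dd)*dd" by (simp add: power2_eq_square algebra_simps)
    also have "\<dots> = ((2*a - 1) * c + S)^2 + 2*c*((2*a - 1) * c + S)*dd" using zd by simp
    also have "\<dots> = a * P^2"
    proof -
      have "((2*a - 1) * c + S)^2 + 2*c*((2*a - 1) * c + S)*dd - a * P^2 = dd*(S^2 - ((1 - 4*a) * c^2 + a))"
        unfolding P_def dd_def by (simp add: power2_eq_square algebra_simps)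
      then show ?thesis using S2 by simp
    qed
    also have "\<dots> = (a * m^2) * dd^2" using md by (simp add: power2_eq_square algebra_simps)
    finally show ?thesis .
  qed
  then have quad: "ze^2 + 2*c*ze = a * m^2" using dd by simp
  have ze0: "ze \<noteq> 0" using quad m0 a(3) by auto
  have ze2: "2*c + ze \<noteq> 0"
  proof
    assume "2*c + ze = 0"
    moreover have "ze^2 + 2*c*ze = ze*(2*c+ze)" by (simp add: power2_eq_square algebra_simps)
    ultimately have "ze^2 + 2*c*ze = 0" by simp
    then show False using quad m0 a(3) by auto
  qed
  show "\<not> z_singular a th" unfolding z_singular_def using dd ze2 m0
    by (simp add: dd_def c_def ze_def m_def mult.commute mult.left_commute)
  have "z_raw a th = a*ze / ((2*c + ze) * m)"
    unfolding z_raw_def ze_def m_def c_def by (simp add: mult.commute mult.left_commute)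
  also have "\<dots> = ze^2 / m^3"
  proof -
    have "a*ze * m^3 = ze^2 * ((2*c + ze) * m)"
    proof -
      have "a*ze*m^3 = ze * m * (a*m^2)" by (simp add: power2_eq_square power3_eq_cube)
      also have "\<dots> = ze*m*(ze^2 + 2*c*ze)" using quad by simp
      finally show ?thesis by (simp add: power2_eq_square algebra_simps)
    qed
    moreover have "(2*c + ze) * m \<noteq> 0" "m^3 \<noteq> 0" using m0 ze2 by auto
    ultimately show ?thesis using frac_eq_eq[of "(2*c+ze)*m" "m^3" "a*ze" "ze^2"] by simp
  qed
  also have "\<dots> = fq a (1/m)"
  proof -
    have "ze^2 = 1 - m + a*m^2" using quad unfolding m_def by (simp add: algebra_simps)
    then show ?thesis unfolding fq_def using m0 by (simp add: field_simps power2_eq_square power3_eq_cube)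
  qed
  finally show "z_raw a th = G a (cos th)" unfolding G_def using Q c_def by simp
qed


lemma id1: "4*T*((1-4*((1-r^2)/3))*T + (1-r^2)/3) - (2*T-1-((1-2*r)/3)*(4*T-1))^2
   = (4*T-1)*(1-(1-2*r)/3)^2*(1-(T::real))"
  by (simp add: field_simps power2_eq_square)

lemma id2: "q^3 - q^2 + ((1-r^2)/3)*q - (-2 + 9*((1-r^2)/3) - 2*r^3)/27
   = (q - (1+r)/3)^2 * (q - (1-2*r)/3)" for q r :: real
  by (simp add: field_simps power2_eq_square power3_eq_cube)

lemma r_facts:
  assumes "a \<le> 1/3"
  shows "sqrt (1 - 3*a) ^ 2 = 1 - 3*a" "sqrt (1 - 3*a) \<ge> 0"
    "a = (1 - sqrt (1 - 3*a)^2)/3" "sqrt ((1 - 3*a)^3) = sqrt (1 - 3*a) ^ 3"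
  using assms by (auto simp: real_sqrt_power)

lemma fq_bound:
  assumes "a \<le> 1/3" "q < (1 - 2 * sqrt (1 - 3*a))/3"
  shows "fq a q < (-2 + 9*a - 2 * sqrt ((1 - 3*a)^3)) / 27"
proof -
  define r where "r = sqrt (1 - 3*a)"
  have r: "r \<ge> 0" "a = (1-r^2)/3" "sqrt ((1 - 3*a)^3) = r^3" using r_facts[OF assms(1)] unfolding r_def by auto
  have "fq a q - (-2 + 9*a - 2 * sqrt ((1 - 3*a)^3)) / 27 = (q - (1+r)/3)^2 * (q - (1-2*r)/3)"
    unfolding fq_def r(3) apply (subst r(2))+ using id2[of q r] by simp
  moreover have "q \<noteq> (1+r)/3" using assms(2) r unfolding r_def by auto
  moreover have "q - (1-2*r)/3 < 0" using assms(2) unfolding r_def by simp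
  ultimately show ?thesis by (smt (verit) mult_pos_neg zero_less_power2)
qed

lemma fq_q0:
  assumes "a \<le> 1/3"
  shows "G a (-1) = (-2 + 9*a - 2 * sqrt ((1 - 3*a)^3)) / 27"
proof -
  define r where "r = sqrt (1 - 3*a)"
  have r: "r \<ge> 0" "a = (1-r^2)/3" "sqrt ((1 - 3*a)^3) = r^3" using r_facts[OF assms(1)] unfolding r_def by auto
  have "Sf a (-1) = r" unfolding Sf_def r_def by simp
  then have Q: "Qf a (-1) = (1-2*r)/3" unfolding Qf_def by (simp add: field_simps)
  have "G a (-1) - (-2 + 9*a - 2 * sqrt ((1 - 3*a)^3)) / 27 = 0"
    unfolding G_def Q fq_def r(3) apply (subst r(2))+ using id2[of "(1-2*r)/3" r] by simp
  then show ?thesis by simp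
qed

lemma Q_lt:
  assumes a: "a \<le> 1/3" and c: "-1 < c" "c < -1/2"
  shows "Qf a c < (1 - 2 * sqrt (1 - 3*a))/3"
proof -
  define r where "r = sqrt (1 - 3*a)"
  have r: "r \<ge> 0" "a = (1-r^2)/3" using r_facts[OF a] unfolding r_def by auto
  define q0 where "q0 = (1-2*r)/3"
  define T where "T = c^2"
  define S where "S = Sf a c"
  have T: "T > 1/4" "T < 1" using csq[OF c] unfolding T_def by auto
  have S: "S^2 = (1 - 4*a) * T + a" "S \<ge> 0" using S_sq[OF a c] unfolding S_def T_def by auto
  define L where "L = 2*T - 1 - q0*(4*T-1)"
  have key: "L < -2*c*S"
  proof (cases "L < 0")
    case True
    have "0 \<le> (-c) * S" using c S by (intro mult_nonneg_nonneg) auto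
    then have "-2*c*S \<ge> 0" by (simp add: mult.commute)
    then show ?thesis using True by linarith
  next
    case False
    have "(-2*c*S)^2 = 4*T*S^2" by (simp add: T_def power2_eq_square algebra_simps)
    then have "(-2*c*S)^2 - L^2 = 4*T*((1-4*a)*T+a) - L^2" using S by simp
    also have "\<dots> = (4*T-1)*(1-q0)^2*(1-T)" unfolding L_def q0_def apply (subst r(2))+ using id1[of T r] by simp
    also have "\<dots> > 0" using T r unfolding q0_def by (intro mult_pos_pos) auto
    finally have "L^2 < (-2*c*S)^2" by simp
    moreover have "0 \<le> (-c) * S" using c S by (intro mult_nonneg_nonneg) auto
    moreover have "-2*c*S \<ge> 0" using calculation(2) by (simp add: mult.commute)
    ultimately show ?thesis using power2_less_imp_less by blast
  qed
  have D: "1 - 4*T < 0" using T by simp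
  have "Qf a c = (1 - 2*T - 2*c*S) / (1 - 4*T)" unfolding Qf_def S_def T_def ..
  also have "\<dots> < q0" using key D unfolding L_def by (simp add: divide_less_eq algebra_simps)
  finally show ?thesis unfolding q0_def r_def .
qed



lemma G_cont: "1 - 4*c^2 \<noteq> 0 \<Longrightarrow> isCont (G a) c"
  unfolding G_def fq_def Qf_def Sf_def by (intro continuous_intros) auto

lemma cos_facts:
  assumes "2*pi/3 < th" "th < pi"
  shows "-1 < cos th" "cos th < -1/2"
proof -
  have "cos pi < cos th" using assms pi_gt_zero by (intro cos_monotone_0_pi) auto
  then show "-1 < cos th" by simp
  have "cos th < cos (2*pi/3)" using assms pi_gt_zero by (intro cos_monotone_0_pi) auto
  then show "cos th < -1/2" using cos_120 by simp
qed

lemma fq_le: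
  assumes "-1 \<le> a" "q \<le> -1"
  shows "fq a q \<le> q"
proof -
  have "q^2 \<ge> 1" using assms by (smt (verit) one_le_power power2_eq_square mult_le_cancel_left1 minus_mult_minus)
  then have X: "q^2 - q + a \<ge> 1" using assms by linarith
  have "fq a q = q * (q^2 - q + a)" unfolding fq_def by (simp add: power2_eq_square power3_eq_cube algebra_simps)
  also have "\<dots> \<le> q * 1" using X assms by (intro mult_left_mono_neg) auto
  finally show ?thesis by simp
qed

lemma small:
  assumes "K \<ge> (2::real)" "a \<le> 1/3"
  shows "\<exists>c1. -1 < c1 \<and> c1 < -1/2 \<and> Qf a c1 \<le> -K"
proof -
  define e where "e = 1/(16*K)"
  have e: "e > 0" "e \<le> 1/32" using assms unfolding e_def by (auto simp: field_simps)
  define c1 where "c1 = - sqrt (1/4 + e)"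
  have c12: "c1^2 = 1/4 + e" unfolding c1_def using e by simp
  have "sqrt (1/4 + e) < 1" using e by (simp add: real_sqrt_less_iff)
  moreover have "sqrt (1/4) < sqrt (1/4 + e)" using e by (simp only: real_sqrt_less_iff)
  moreover have "sqrt (1/4::real) = 1/2" by (simp add: real_sqrt_divide)
  ultimately have c1: "-1 < c1" "c1 < -1/2" unfolding c1_def by auto
  have S: "Sf a c1 \<ge> 0" using S_sq[OF assms(2) c1] by simp
  have "0 \<le> (-c1) * Sf a c1" using c1 S by (intro mult_nonneg_nonneg) auto
  then have N: "1 - 2*c1^2 - 2*c1*Sf a c1 \<ge> 1/4" using c12 e by (simp add: algebra_simps)
  have D: "1 - 4*c1^2 = -4*e" using c12 by simp
  define NN where "NN = 1 - 2*c1^2 - 2*c1*Sf a c1"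
  have "NN/(4*e) \<ge> (1/4)/(4*e)" using N e unfolding NN_def by (intro divide_right_mono) auto
  moreover have "(1/4)/(4*e) = K" unfolding e_def using assms by simp
  moreover have "Qf a c1 = - (NN/(4*e))" unfolding Qf_def D NN_def by simp
  ultimately have "Qf a c1 \<le> -K" by simp
  then show ?thesis using c1 by blast
qed



lemma zfun_eq:
  assumes a: "-1 \<le> a" "a \<le> 1/3" "a \<noteq> 0" and th: "2*pi/3 < th" "th < pi"
  shows "z_fun a th = G a (cos th)"
proof (cases "1 - 4*a*(cos th)^2 = 0")
  case False
  then show ?thesis using lemA[OF a cos_facts[OF th] False] unfolding z_fun_def by simp
next
  case True
  then have sing: "z_singular a th" unfolding z_singular_def by simp
  have ev: "eventually (\<lambda>x. G a (cos x) = z_raw a x) (at th)"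
    unfolding eventually_at_topological
  proof (intro exI[of _ "{2*pi/3<..<pi}"] conjI ballI impI)
    show "open {2*pi/3<..<pi::real}" by simp
    show "th \<in> {2*pi/3<..<pi}" using th by simp
    fix x assume x: "x \<in> {2*pi/3<..<pi}" "x \<noteq> th"
    have cx: "-1 < cos x" "cos x < -1/2" using cos_facts[of x] x by auto
    have ct: "-1 < cos th" "cos th < -1/2" using cos_facts[OF th] by auto
    have "1 - 4*a*(cos x)^2 \<noteq> 0"
    proof
      assume "1 - 4*a*(cos x)^2 = 0"
      then have "a*(cos x)^2 = a*(cos th)^2" using True by linarith
      then have "(cos x)^2 = (cos th)^2" using a(3) by simp
      then have "cos x = cos th \<or> cos x = - cos th" using power2_eq_iff by blast
      then have "cos x = cos th" using cx ct by linarith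
      then have "x = th" using x th pi_gt_zero cos_inj_pi[of x th] by auto
      then show False using x by simp
    qed
    then show "G a (cos x) = z_raw a x" using lemA[OF a cx] by simp
  qed
  have ct: "-1 < cos th" "cos th < -1/2" using cos_facts[OF th] by auto
  have "1 - 4*(cos th)^2 \<noteq> 0" using csq[OF ct] by simp
  then have "isCont (G a) (cos th)" by (rule G_cont)
  moreover have "isCont cos th" by simp
  ultimately have "isCont (\<lambda>x. G a (cos x)) th" using isCont_o2 by blast
  then have "((\<lambda>x. G a (cos x)) \<longlongrightarrow> G a (cos th)) (at th)" by (simp add: isCont_def)
  then have "(z_raw a \<longlongrightarrow> G a (cos th)) (at th)" using ev by (rule Lim_transform_eventually)
  then have "Lim (at th) (z_raw a) = G a (cos th)" by (intro tendsto_Lim) auto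
  then show ?thesis using sing unfolding z_fun_def by simp
qed


theorem lemma2p9:
  fixes a :: real
  assumes "-1 \<le> a" and "a \<le> 1/3" and "a \<noteq> 0"
  shows "z_fun a ` {2*pi/3<..<pi} = {..< (-2 + 9*a - 2 * sqrt ((1 - 3*a)^3)) / 27}"
proof (intro equalityI subsetI)
  fix y assume "y \<in> z_fun a ` {2*pi/3<..<pi}"
  then obtain th where th: "2*pi/3 < th" "th < pi" and y: "y = z_fun a th" by auto
  have "y = fq a (Qf a (cos th))" using zfun_eq[OF assms th] y unfolding G_def by simp
  moreover have "Qf a (cos th) < (1 - 2 * sqrt (1 - 3*a))/3" using Q_lt[OF assms(2) cos_facts[OF th]] .
  ultimately show "y \<in> {..< (-2 + 9*a - 2 * sqrt ((1 - 3*a)^3)) / 27}"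
    using fq_bound[OF assms(2)] by simp
next
  fix y assume "y \<in> {..< (-2 + 9*a - 2 * sqrt ((1 - 3*a)^3)) / 27}"
  then have yb: "y < G a (-1)" using fq_q0[OF assms(2)] by simp
  obtain c1 where c1: "-1 < c1" "c1 < -1/2" "Qf a c1 \<le> -(2 + \<bar>y\<bar>)"
    using small[of "2 + \<bar>y\<bar>" a] assms by auto
  have "G a c1 \<le> Qf a c1" unfolding G_def using fq_le[OF assms(1)] c1 by simp
  then have yc: "G a c1 \<le> y" using c1 by linarith
  have "continuous_on {-1..c1} (G a)"
  proof (intro continuous_at_imp_continuous_on ballI G_cont)
    fix x assume "x \<in> {-1..c1}"
    show "1 - 4*x^2 \<noteq> 0"
    proof
      assume h: "1 - 4*x^2 = 0"
      have "x < -1/2" using \<open>x \<in> {-1..c1}\<close> c1 by auto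
      then have "(x - 1/2) * (x + 1/2) > 0" by (intro mult_neg_neg) auto
      then show False using h by (simp add: power2_eq_square algebra_simps)
    qed
  qed
  then obtain c where c: "-1 \<le> c" "c \<le> c1" "G a c = y"
    using IVT2'[of "G a" c1 y "-1"] yc yb c1 by auto
  have cne: "c \<noteq> -1" using c yb by auto
  define th where "th = arccos c"
  have cth: "cos th = c" unfolding th_def using c c1 by simp
  have "arccos (-(1/2)) < arccos c" using c c1 cne by (intro arccos_less_arccos) auto
  then have t1: "2*pi/3 < th" unfolding th_def by simp
  have "arccos c < arccos (-1)" using c c1 cne by (intro arccos_less_arccos) auto
  then have t2: "th < pi" unfolding th_def by simp
  have "z_fun a th = y" using zfun_eq[OF assms t1 t2] cth c by simp
  then show "y \<in> z_fun a ` {2*pi/3<..<pi}" using t1 t2 by (intro rev_image_eqI[of th]) auto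
qed

end
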